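(* Let $d\ge2$. For $k\in\mathbb{N}$ let $g_k$ be the density on $S^d$ given by $g_k(\theta_0)=\frac{1+\cos^k\theta_0}{V_k}$, where $V_k=\int_{S^d}(1+\cos^k\theta_0)\,dS^d$. For $k,l\in\mathbb{N}$, let $Y_k,Y_l$ be independent isotropic random variables on $S^d$ with densities $g_k$ and $g_l$ respectively. Then $$V(Y_k+Y_l)=\frac{2\big(V(Y_k)+V(Y_l)\big)-V(Y_k)V(Y_l)}{2}.$$
   Context: $S^d=\{x\in\mathbb{R}^{d+1}:\|x\|=1\}$, $P=(1,0,\dots,0)$, and $\theta_0\in[0,\pi]$ denotes the first polar angle of a point $x\in S^d$, so $x_0=\cos\theta_0=\langle x,P\rangle$. The variance of a random variable $X$ on $S^d$ is $V(X)=E[\|X-P\|^2]=E[2-2\cos\theta_0]$. An isotropic random variable is one whose density depends only on $\theta_0$, written $y\mapsto F(\langle y,P\rangle)$. The sum $X_1+X_2$ of independent isotropic random variables with densities $F_1(\langle y,P\rangle)$, $F_2(\langle y,P\rangle)$ is the random variable with density $f(x)=\int_{S^d}F_1(\langle x',P\rangle)F_2(\langle x,x'\rangle)\,dx'$ (first move from $P$ to $x'$ according to $X_1$, then from $x'$ isotropically around $x'$ according to $X_2$). *)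

theory Defs
  imports "HOL-Analysis.Analysis"
begin

text \<open>Surface measure on the unit sphere of a Euclidean space, defined via the cone
construction: sigma(A) = DIM * lebesgue({t x. x in A, 0 < t < 1}).  Equivalently it is
the push-forward of DIM times Lebesgue measure on the open unit ball under the radial
projection x to x/|x|.  (Any positive multiple of the surface measure gives the same
statement, since all densities are normalised with respect to the same measure.)\<close>
definition sphere_measure :: "'a::euclidean_space measure" where
  "sphere_measure =
     distr (density (restrict_space lborel (ball 0 1)) (\<lambda>_. ennreal (real DIM('a))))
           borel (\<lambda>x. sgn x)"

definition norm_const :: "'a::euclidean_space \<Rightarrow> nat \<Rightarrow> real" where
  "norm_const P k = (\<integral>x. 1 + (x \<bullet> P) ^ k \<partial>sphere_measure)"

text \<open>Profile of the isotropic density g_k, as a function of cos theta_0 = t.\<close>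
definition g_prof :: "'a::euclidean_space \<Rightarrow> nat \<Rightarrow> real \<Rightarrow> real" where
  "g_prof P k t = (1 + t ^ k) / norm_const P k"

text \<open>Density of the sum X1 + X2 of independent isotropic random variables with
profiles F1, F2.\<close>
definition iso_sum_density ::
  "'a::euclidean_space \<Rightarrow> (real \<Rightarrow> real) \<Rightarrow> (real \<Rightarrow> real) \<Rightarrow> 'a \<Rightarrow> real" where
  "iso_sum_density P F1 F2 x = (\<integral>x'. F1 (x' \<bullet> P) * F2 (x \<bullet> x') \<partial>sphere_measure)"

definition sph_var :: "'a::euclidean_space \<Rightarrow> ('a \<Rightarrow> real) \<Rightarrow> real" where
  "sph_var P f = (\<integral>x. (norm (x - P))\<^sup>2 * f x \<partial>sphere_measure)"

end

theory Submission
  imports Defs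
begin


typedef (overloaded) ('a::euclidean_space) bidx = "Basis :: 'a set"
  using nonempty_Basis by blast

instance bidx :: (euclidean_space) finite
proof
  have "(UNIV :: 'a bidx set) = Abs_bidx ` Basis"
    by (metis type_definition.Abs_image[OF type_definition_bidx])
  then show "finite (UNIV :: 'a bidx set)" by (metis finite_imageI finite_Basis)
qed

instantiation bidx :: (euclidean_space) linorder
begin
definition less_eq_bidx :: "'a bidx \<Rightarrow> 'a bidx \<Rightarrow> bool" where
  "less_eq_bidx x y \<longleftrightarrow> to_nat_on (UNIV::'a bidx set) x \<le> to_nat_on (UNIV::'a bidx set) y"
definition less_bidx :: "'a bidx \<Rightarrow> 'a bidx \<Rightarrow> bool" where
  "less_bidx x y \<longleftrightarrow> to_nat_on (UNIV::'a bidx set) x < to_nat_on (UNIV::'a bidx set) y"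
instance
proof
  have inj: "inj (to_nat_on (UNIV::'a bidx set))"
    by (intro inj_on_to_nat_on countable_finite) simp
  fix x y z :: "'a bidx"
  show "(x < y) = (x \<le> y \<and> \<not> y \<le> x)" by (auto simp: less_eq_bidx_def less_bidx_def)
  show "x \<le> x" by (simp add: less_eq_bidx_def)
  show "x \<le> y \<Longrightarrow> y \<le> z \<Longrightarrow> x \<le> z" by (simp add: less_eq_bidx_def)
  show "x \<le> y \<Longrightarrow> y \<le> x \<Longrightarrow> x = y" using inj by (simp add: less_eq_bidx_def inj_eq)
  show "x \<le> y \<or> y \<le> x" by (auto simp: less_eq_bidx_def)
qed
end

instance bidx :: (euclidean_space) wellorder
proof
  fix P :: "'a bidx \<Rightarrow> bool" and a :: "'a bidx"
  assume step: "\<And>x. (\<And>y. y < x \<Longrightarrow> P y) \<Longrightarrow> P x"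
  show "P a"
  proof (induction a rule: measure_induct_rule[where f="to_nat_on (UNIV::'a bidx set)"])
    case (less x)
    show ?case by (rule step, rule less.IH, simp add: less_bidx_def)
  qed
qed

definition phi :: "'a::euclidean_space \<Rightarrow> real ^ 'a bidx" where
  "phi x = (\<chi> i. x \<bullet> Rep_bidx i)"
definition psi :: "real ^ 'a bidx \<Rightarrow> 'a::euclidean_space" where
  "psi v = (\<Sum>i\<in>UNIV. (v $ i) *\<^sub>R Rep_bidx i)"

lemma Rep_bidx_range: "range (Rep_bidx :: 'a::euclidean_space bidx \<Rightarrow> 'a) = Basis"
  using type_definition.Rep_range[OF type_definition_bidx] .

lemma sum_bidx: "(\<Sum>i\<in>UNIV. g (Rep_bidx i)) = (\<Sum>b\<in>(Basis::'a::euclidean_space set). g b)"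
proof -
  have "(\<Sum>b\<in>(Basis::'a set). g b) = (\<Sum>b\<in>range (Rep_bidx :: 'a bidx \<Rightarrow> 'a). g b)"
    by (simp add: Rep_bidx_range)
  also have "\<dots> = (\<Sum>i\<in>UNIV. g (Rep_bidx i))"
    by (subst sum.reindex) (auto simp: inj_def Rep_bidx_inject)
  finally show ?thesis by simp
qed

lemma prod_bidx: "(\<Prod>i\<in>UNIV. g (Rep_bidx i)) = (\<Prod>b\<in>(Basis::'a::euclidean_space set). g b)"
proof -
  have "(\<Prod>b\<in>(Basis::'a set). g b) = (\<Prod>b\<in>range (Rep_bidx :: 'a bidx \<Rightarrow> 'a). g b)"
    by (simp add: Rep_bidx_range)
  also have "\<dots> = (\<Prod>i\<in>UNIV. g (Rep_bidx i))"
    by (subst prod.reindex) (auto simp: inj_def Rep_bidx_inject)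
  finally show ?thesis by simp
qed

lemma psi_phi: "psi (phi x) = x"
  using sum_bidx[of "\<lambda>b. (x \<bullet> b) *\<^sub>R b"] by (simp add: psi_def phi_def euclidean_representation)

lemma inner_psi_Rep: "psi v \<bullet> Rep_bidx j = v $ j"
proof -
  have "psi v \<bullet> Rep_bidx j = (\<Sum>i\<in>UNIV. v $ i * (Rep_bidx i \<bullet> Rep_bidx j))"
    by (simp add: psi_def inner_sum_left)
  also have "\<dots> = (\<Sum>i\<in>UNIV. if i = j then v $ i else 0)"
    by (intro sum.cong) (auto simp: inner_Basis[OF Rep_bidx Rep_bidx] Rep_bidx_inject)
  finally show ?thesis by simp
qed

lemma phi_psi: "phi (psi v) = v"
  by (simp add: phi_def inner_psi_Rep vec_eq_iff)

lemma linear_phi: "linear phi"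
  by (rule linearI) (auto simp: phi_def vec_eq_iff inner_add_left)

lemma linear_psi: "linear psi"
  by (rule linearI) (auto simp: psi_def sum.distrib scaleR_add_left scaleR_sum_right)

lemma inner_phi: "phi x \<bullet> phi y = x \<bullet> y"
proof -
  have "phi x \<bullet> phi y = (\<Sum>i\<in>UNIV. (x \<bullet> Rep_bidx i) * (y \<bullet> Rep_bidx i))"
    by (simp add: inner_vec_def phi_def)
  also have "\<dots> = x \<bullet> y"
    by (subst sum_bidx[of "\<lambda>b. (x \<bullet> b) * (y \<bullet> b)"]) (simp add: euclidean_inner[of x y])
  finally show ?thesis .
qed

lemma inner_psi: "psi v \<bullet> psi w = v \<bullet> w"
  using inner_phi[of "psi v" "psi w"] by (simp add: phi_psi)

lemma meas_phi: "phi \<in> borel_measurable borel"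
  by (intro borel_measurable_continuous_onI linear_continuous_on linear_conv_bounded_linear[THEN iffD1] linear_phi)
lemma meas_psi: "psi \<in> borel_measurable borel"
  by (intro borel_measurable_continuous_onI linear_continuous_on linear_conv_bounded_linear[THEN iffD1] linear_psi)

lemma distr_phi: "distr (lborel :: 'a::euclidean_space measure) borel phi = lborel"
proof (rule lborel_eqI[symmetric])
  fix l u :: "real ^ 'a bidx"
  assume le: "\<And>b. b \<in> Basis \<Longrightarrow> l \<bullet> b \<le> u \<bullet> b"
  have le': "l $ i \<le> u $ i" for i
    using le[of "axis i 1"] by (auto simp: inner_axis Basis_vec_def)
  have pre: "phi -` box l u = box (psi l) (psi u :: 'a)"
  proof -
    have "x \<in> box (psi l) (psi u) \<longleftrightarrow> (\<forall>i. l $ i < x \<bullet> Rep_bidx i \<and> x \<bullet> Rep_bidx i < u $ i)" for x :: 'a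
    proof -
      have "x \<in> box (psi l) (psi u) \<longleftrightarrow> (\<forall>b\<in>range (Rep_bidx :: 'a bidx \<Rightarrow> 'a). psi l \<bullet> b < x \<bullet> b \<and> x \<bullet> b < psi u \<bullet> b)"
        by (simp add: mem_box Rep_bidx_range)
      also have "\<dots> \<longleftrightarrow> (\<forall>i. l $ i < x \<bullet> Rep_bidx i \<and> x \<bullet> Rep_bidx i < u $ i)"
        by (auto simp: inner_psi_Rep)
      finally show ?thesis .
    qed
    then show ?thesis by (auto simp: mem_box_cart phi_def)
  qed
  have "emeasure (distr lborel borel phi) (box l u) = emeasure lborel (box (psi l) (psi u :: 'a))"
    using meas_phi by (subst emeasure_distr) (auto simp: pre)
  also have "\<dots> = (\<Prod>b\<in>Basis. (psi u - psi l :: 'a) \<bullet> b)"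
  proof (intro emeasure_lborel_box)
    fix b :: 'a assume "b \<in> Basis"
    then obtain i where "b = Rep_bidx i" using Rep_bidx_range by blast
    then show "psi l \<bullet> b \<le> psi u \<bullet> b" using le' by (simp add: inner_psi_Rep)
  qed
  also have "\<dots> = (\<Prod>i\<in>UNIV. u $ i - l $ i)"
    by (subst prod_bidx[symmetric]) (simp add: inner_diff_left inner_psi_Rep)
  also have "\<dots> = (\<Prod>b\<in>Basis. (u - l) \<bullet> b)"
    by (simp add: Basis_vec_def cart_eq_inner_axis axis_eq_axis prod.UNION_disjoint inner_diff_left)
  finally show "emeasure (distr lborel borel phi) (box l u) = (\<Prod>b\<in>Basis. (u - l) \<bullet> b)" .
qed simp


lemma distr_orth_vec:
  fixes T :: "real^'n::{finite,wellorder} \<Rightarrow> real^'n::_"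
  assumes T: "orthogonal_transformation T"
  shows "distr lborel borel T = lborel"
proof (rule lborel_eqI[symmetric])
  fix l u :: "real^'n::{finite,wellorder}"
  assume le: "\<And>b. b \<in> Basis \<Longrightarrow> l \<bullet> b \<le> u \<bullet> b"
  have lin: "linear T" using T by (simp add: orthogonal_transformation_linear)
  have mT: "T \<in> borel_measurable borel"
    by (intro borel_measurable_continuous_onI linear_continuous_on linear_conv_bounded_linear[THEN iffD1] lin)
  have Ti: "orthogonal_transformation (inv T)" using T by (rule orthogonal_transformation_inv)
  have eqv: "T -` box l u = inv T ` box l u"
    using T by (simp add: bij_vimage_eq_inv_image orthogonal_transformation_bij)
  have sb: "T -` box l u \<in> sets borel" using mT by (simp add: measurable_sets_borel)
  have bnd: "bounded (T -` box l u)"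
    unfolding eqv using Ti by (intro bounded_linear_image bounded_box) (simp add: linear_conv_bounded_linear[symmetric] orthogonal_transformation_linear)
  have fin1: "emeasure lborel (T -` box l u) \<noteq> \<infinity>"
    using emeasure_bounded_finite[OF bnd] by simp
  have "emeasure (distr lborel borel T) (box l u) = emeasure lborel (T -` box l u)"
    using mT by (subst emeasure_distr) auto
  also have "\<dots> = ennreal (measure lborel (T -` box l u))"
    using fin1 by (simp add: emeasure_eq_ennreal_measure)
  also have "measure lborel (T -` box l u) = measure lebesgue (inv T ` box l u)"
    using sb by (simp add: eqv[symmetric])
  also have "\<dots> = measure lebesgue (box l u)"
    using Ti by (intro measure_orthogonal_image) auto
  also have "\<dots> = measure lborel (box l u)" by simp
  also have "ennreal (measure lborel (box l u)) = emeasure lborel (box l u)"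
    using emeasure_lborel_box_finite[of l u] by (intro emeasure_eq_ennreal_measure[symmetric]) auto
  also have "\<dots> = (\<Prod>b\<in>Basis. (u - l) \<bullet> b)" using le by (rule emeasure_lborel_box)
  finally show "emeasure (distr lborel borel T) (box l u) = (\<Prod>b\<in>Basis. (u - l) \<bullet> b)" .
qed simp

lemma distr_psi: "distr (lborel :: (real^'a::euclidean_space bidx) measure) borel psi = (lborel :: 'a measure)"
proof -
  have "distr (lborel :: (real^'a bidx) measure) borel psi = distr (distr (lborel :: 'a measure) borel phi) borel psi"
    by (simp add: distr_phi)
  also have "\<dots> = distr lborel borel (psi \<circ> phi)"
    using meas_phi meas_psi by (subst distr_distr) auto
  also have "psi \<circ> phi = (\<lambda>x::'a. x)" by (simp add: fun_eq_iff psi_phi)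
  also have "distr lborel borel (\<lambda>x::'a. x) = lborel" by (rule distr_id2) simp
  finally show ?thesis .
qed

lemma lborel_isometry_invariant:
  fixes H :: "'a::euclidean_space \<Rightarrow> 'a"
  assumes lin: "linear H" and inn: "\<And>v w. H v \<bullet> H w = v \<bullet> w"
  shows "distr lborel borel H = lborel"
proof -
  define T where "T = phi \<circ> H \<circ> psi"
  have linT: "linear T" unfolding T_def
    by (intro linear_compose linear_phi linear_psi lin)
  have "orthogonal_transformation T"
    unfolding orthogonal_transformation_def
    using linT by (simp add: T_def inner_phi inn inner_psi)
  then have dT: "distr lborel borel T = lborel" by (rule distr_orth_vec)
  have mH: "H \<in> borel_measurable borel"
    by (intro borel_measurable_continuous_onI linear_continuous_on linear_conv_bounded_linear[THEN iffD1] lin)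
  have mT: "T \<in> borel_measurable borel"
    by (intro borel_measurable_continuous_onI linear_continuous_on linear_conv_bounded_linear[THEN iffD1] linT)
  have "distr (lborel :: 'a measure) borel H = distr (distr (lborel :: (real^'a bidx) measure) borel psi) borel H"
    by (simp add: distr_psi)
  also have "\<dots> = distr lborel borel (H \<circ> psi)"
    using mH meas_psi by (subst distr_distr) auto
  also have "H \<circ> psi = psi \<circ> T" by (simp add: fun_eq_iff T_def psi_phi)
  also have "distr lborel borel (psi \<circ> T) = distr (distr (lborel :: (real^'a bidx) measure) borel T) borel psi"
    using mT meas_psi by (subst distr_distr) auto
  also have "\<dots> = lborel" by (simp add: dT distr_psi)
  finally show ?thesis .
qed



lemma sets_sph[simp, measurable_cong]: "sets (sphere_measure::'a::euclidean_space measure) = sets borel"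
  by (simp add: sphere_measure_def)

lemma space_sph[simp]: "space (sphere_measure::'a::euclidean_space measure) = UNIV"
  by (simp add: sphere_measure_def)

lemma meas_sph_iff:
  fixes f :: "'a::euclidean_space \<Rightarrow> 'b::topological_space"
  shows "f \<in> borel_measurable (sphere_measure::'a measure) \<longleftrightarrow> f \<in> borel_measurable borel"
proof -
  have "(borel_measurable (sphere_measure::'a measure) :: ('a \<Rightarrow> 'b) set) = borel_measurable borel"
    by (rule measurable_cong_sets) simp_all
  then show ?thesis by simp
qed

lemma integral_sph:
  fixes f :: "'a::euclidean_space \<Rightarrow> real"
  assumes f: "f \<in> borel_measurable borel"
  shows "lebesgue_integral sphere_measure f = (\<integral>x. indicator (ball 0 1) x *\<^sub>R (real DIM('a) * f (sgn x)) \<partial>lborel)"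
proof -
  have ms: "sgn \<in> restrict_space lborel (ball (0::'a) 1) \<rightarrow>\<^sub>M borel"
    by (intro measurable_restrict_space1) simp
  have mf: "(\<lambda>x. f (sgn x)) \<in> borel_measurable (restrict_space lborel (ball (0::'a) 1))"
    using measurable_comp[OF ms f] by (simp add: comp_def)
  have "lebesgue_integral sphere_measure f =
     lebesgue_integral (density (restrict_space lborel (ball (0::'a) 1)) (\<lambda>_. ennreal (real DIM('a)))) (\<lambda>x. f (sgn x))"
    unfolding sphere_measure_def using ms f by (subst integral_distr) auto
  also have "\<dots> = lebesgue_integral (restrict_space lborel (ball (0::'a) 1)) (\<lambda>x. real DIM('a) *\<^sub>R f (sgn x))"
    using mf by (subst integral_density) auto
  also have "\<dots> = (\<integral>x. indicator (ball 0 1) x *\<^sub>R (real DIM('a) * f (sgn x)) \<partial>lborel)"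
    by (subst integral_restrict_space) auto
  finally show ?thesis .
qed

lemma sph_invariant:
  fixes H :: "'a::euclidean_space \<Rightarrow> 'a" and f :: "'a \<Rightarrow> real"
  assumes lin: "linear H" and inn: "\<And>v w. H v \<bullet> H w = v \<bullet> w"
    and f: "f \<in> borel_measurable borel"
  shows "lebesgue_integral sphere_measure (\<lambda>x. f (H x)) = lebesgue_integral sphere_measure f"
proof -
  have mH: "H \<in> borel_measurable borel"
    by (intro borel_measurable_continuous_onI linear_continuous_on linear_conv_bounded_linear[THEN iffD1] lin)
  have nH: "norm (H x) = norm x" for x
    using inn[of x x] by (simp add: norm_eq_sqrt_inner)
  have sH: "sgn (H x) = H (sgn x)" for x
    using nH[of x] by (simp add: sgn_div_norm linear_scale[OF lin] divide_inverse_commute scaleR_conv_of_real linear_cmul[OF lin])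
  define G where "G y = indicator (ball (0::'a) 1) y *\<^sub>R (real DIM('a) * f (sgn y))" for y
  have [measurable]: "ball (0::'a) 1 \<in> sets borel" by simp
  have mG: "G \<in> borel_measurable borel" unfolding G_def using f by measurable
  have "lebesgue_integral sphere_measure (\<lambda>x. f (H x)) = (\<integral>x. G (H x) \<partial>lborel)"
    using measurable_comp[OF mH f] by (subst integral_sph) (auto simp: comp_def G_def sH nH indicator_def)
  also have "\<dots> = lebesgue_integral (distr lborel borel H) G"
    using mH mG by (subst integral_distr) auto
  also have "\<dots> = lebesgue_integral sphere_measure f"
    using f by (simp add: lborel_isometry_invariant[OF lin inn] integral_sph G_def[abs_def])
  finally show ?thesis .
qed

lemma AE_sph: "AE x in (sphere_measure::'a::euclidean_space measure). norm x = 1"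
proof -
  have ms: "sgn \<in> restrict_space lborel (ball (0::'a) 1) \<rightarrow>\<^sub>M borel"
    by (intro measurable_restrict_space1) simp
  have "AE x in lborel. x \<in> ball (0::'a) 1 \<longrightarrow> norm (sgn x) = 1"
    using AE_lborel_singleton[of 0] by eventually_elim (simp add: norm_sgn)
  then have "AE x in restrict_space lborel (ball (0::'a) 1). norm (sgn x) = 1"
    by (subst AE_restrict_space_iff) auto
  then have "AE x in density (restrict_space lborel (ball (0::'a) 1)) (\<lambda>_. ennreal (real DIM('a))). norm (sgn x) = 1"
    by (subst AE_density) auto
  then show ?thesis
    unfolding sphere_measure_def using ms by (subst AE_distr_iff) auto
qed

lemma emeasure_sph_UNIV: "emeasure (sphere_measure::'a::euclidean_space measure) UNIV = ennreal (real DIM('a)) * emeasure lborel (ball (0::'a) 1)"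
proof -
  have ms: "sgn \<in> restrict_space lborel (ball (0::'a) 1) \<rightarrow>\<^sub>M borel"
    by (intro measurable_restrict_space1) simp
  have "emeasure (sphere_measure::'a measure) UNIV = emeasure (density (restrict_space lborel (ball (0::'a) 1)) (\<lambda>_. ennreal (real DIM('a)))) (ball 0 1)"
    unfolding sphere_measure_def using ms by (subst emeasure_distr) (auto simp: space_restrict_space)
  also have "\<dots> = (\<integral>\<^sup>+x\<in>ball 0 1. ennreal (real DIM('a)) \<partial>restrict_space lborel (ball (0::'a) 1))"
    by (subst emeasure_density) (auto simp: sets_restrict_space_iff)
  also have "\<dots> = (\<integral>\<^sup>+x. ennreal (real DIM('a)) * indicator (ball (0::'a) 1) x \<partial>lborel)"
  proof -
    have eqf: "(\<lambda>x::'a. ennreal (real DIM('a)) * indicator (ball 0 1) x * indicator (ball 0 1) x) = (\<lambda>x. ennreal (real DIM('a)) * indicator (ball 0 1) x)"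
      by (auto simp: fun_eq_iff split: split_indicator)
    show ?thesis
      apply (subst nn_integral_restrict_space)
       apply simp
      apply (simp only: eqf)
      done
  qed
  also have "\<dots> = ennreal (real DIM('a)) * emeasure lborel (ball (0::'a) 1)"
    by (subst nn_integral_cmult_indicator) auto
  finally show ?thesis .
qed

lemma finite_sph: "finite_measure (sphere_measure::'a::euclidean_space measure)"
proof (rule finite_measureI)
  have "emeasure lborel (ball (0::'a) 1) \<noteq> top"
    using emeasure_lborel_ball_finite[of "0::'a" 1] by (simp add: less_top)
  then show "emeasure (sphere_measure::'a measure) (space sphere_measure) \<noteq> \<infinity>"
    by (simp add: emeasure_sph_UNIV ennreal_mult_eq_top_iff)
qed

lemma measure_sph_pos: "measure (sphere_measure::'a::euclidean_space measure) UNIV > 0"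
proof -
  have "emeasure lborel (ball (0::'a) 1) = ennreal (measure lborel (ball (0::'a) 1))"
    using emeasure_lborel_ball_finite[of "0::'a" 1] by (intro emeasure_eq_ennreal_measure) auto
  then have "measure (sphere_measure::'a measure) UNIV = real DIM('a) * measure lborel (ball (0::'a) 1)"
    by (simp add: measure_def emeasure_sph_UNIV ennreal_mult'[symmetric] enn2real_mult)
  then show ?thesis using content_ball_pos[of 1 "0::'a"] by simp
qed



definition hh :: "'a::euclidean_space \<Rightarrow> 'a \<Rightarrow> 'a" where
  "hh u v = v - (2 * (v \<bullet> u) / (u \<bullet> u)) *\<^sub>R u"

lemma hh_linear: "linear (hh u)"
  by (rule linearI) (simp_all add: hh_def inner_add_left add_divide_distrib distrib_left scaleR_add_left algebra_simps)

lemma hh_sym: "hh u v \<bullet> w = v \<bullet> hh u w"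
  by (simp add: hh_def inner_diff_left inner_diff_right inner_commute)

lemma hh_invol: "hh u (hh u v) = v"
proof (cases "u = 0")
  case True then show ?thesis by (simp add: hh_def)
next
  case False
  then have "u \<bullet> u \<noteq> 0" by simp
  then show ?thesis
    by (simp add: hh_def inner_diff_left algebra_simps field_simps)
qed

lemma hh_inner: "hh u v \<bullet> hh u w = v \<bullet> w"
  by (simp add: hh_sym hh_invol)

lemma hh_swap:
  assumes "norm x = norm y"
  shows "hh (x - y) x = y"
proof (cases "x = y")
  case True then show ?thesis by (simp add: hh_def)
next
  case False
  have xx: "x \<bullet> x = y \<bullet> y" using assms by (simp add: power2_norm_eq_inner[symmetric])
  have uu: "(x - y) \<bullet> (x - y) = 2 * (x \<bullet> x - x \<bullet> y)"
    using xx by (simp add: inner_diff_left inner_diff_right inner_commute)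
  have ne: "(x - y) \<bullet> (x - y) \<noteq> 0" using False by simp
  have xu: "x \<bullet> (x - y) = x \<bullet> x - x \<bullet> y" by (simp add: inner_diff_right)
  have e: "(x - y) \<bullet> (x - y) = 2 * (x \<bullet> (x - y))" using uu xu by simp
  have nz: "x \<bullet> (x - y) \<noteq> 0" using ne e by (metis mult_zero_right)
  have "2 * (x \<bullet> (x - y)) / ((x - y) \<bullet> (x - y)) = 1"
    unfolding e using nz by (metis divide_self mult_eq_0_iff zero_neq_numeral)
  then have "hh (x - y) x = x - 1 *\<^sub>R (x - y)" unfolding hh_def by (simp only:)
  then show ?thesis by simp
qed

lemma hh_self: "hh w w = - w"
  by (cases "w = 0") (auto simp: hh_def scaleR_2 algebra_simps)

lemma hh_orth: "P \<bullet> w = 0 \<Longrightarrow> hh w P = P"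
  by (simp add: hh_def)

lemma integrable_sph:
  fixes f :: "'a::euclidean_space \<Rightarrow> real"
  assumes "f \<in> borel_measurable borel" "\<And>x. norm x = 1 \<Longrightarrow> \<bar>f x\<bar> \<le> B"
  shows "integrable sphere_measure f"
proof (rule finite_measure.integrable_const_bound[OF finite_sph, where B=B])
  show "AE x in sphere_measure. norm (f x) \<le> B"
    using AE_sph by eventually_elim (simp add: assms)
  show "f \<in> borel_measurable sphere_measure" using assms by (simp add: meas_sph_iff)
qed

lemma F_bound:
  fixes F :: "real \<Rightarrow> real"
  assumes "continuous_on UNIV F"
  obtains B where "\<And>t. \<bar>t\<bar> \<le> 1 \<Longrightarrow> \<bar>F t\<bar> \<le> B"
proof -
  have "compact (F ` {-1..1})"
    by (rule compact_continuous_image) (use assms continuous_on_subset in auto)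
  then obtain B where "\<forall>y\<in>F ` {-1..1}. norm y \<le> B"
    using compact_imp_bounded bounded_iff by metis
  then have "\<And>t. \<bar>t\<bar> \<le> 1 \<Longrightarrow> \<bar>F t\<bar> \<le> B" by (auto simp: abs_le_iff)
  then show ?thesis using that by blast
qed

lemma inner_le1: "norm (x::'a::euclidean_space) = 1 \<Longrightarrow> norm v \<le> 1 \<Longrightarrow> \<bar>x \<bullet> v\<bar> \<le> 1"
  using Cauchy_Schwarz_ineq2[of x v] by (simp add: order_trans)

lemma meas_F:
  fixes F :: "real \<Rightarrow> real"
  assumes "continuous_on UNIV F"
  shows "F \<in> borel_measurable borel"
  using assms by (rule borel_measurable_continuous_onI)



lemma sph_hh:
  fixes f :: "'a::euclidean_space \<Rightarrow> real"
  shows "f \<in> borel_measurable borel \<Longrightarrow> lebesgue_integral sphere_measure (\<lambda>x. f (hh u x)) = lebesgue_integral sphere_measure f"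
  by (rule sph_invariant[OF hh_linear hh_inner])

lemma meas_inner_F:
  fixes F :: "real \<Rightarrow> real" and v :: "'a::euclidean_space"
  assumes "continuous_on UNIV F"
  shows "(\<lambda>x::'a. F (x \<bullet> v)) \<in> borel_measurable borel"
    and "(\<lambda>x::'a. (x \<bullet> w) * F (x \<bullet> v)) \<in> borel_measurable borel"
proof -
  have [measurable]: "F \<in> borel_measurable borel" using assms by (rule meas_F)
  show "(\<lambda>x::'a. F (x \<bullet> v)) \<in> borel_measurable borel" by measurable
  show "(\<lambda>x::'a. (x \<bullet> w) * F (x \<bullet> v)) \<in> borel_measurable borel" by measurable
qed

lemma L1:
  fixes F :: "real \<Rightarrow> real" and P v :: "'a::euclidean_space"
  assumes F: "continuous_on UNIV F" and nv: "norm v = norm P"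
  shows "(\<integral>x. F (x \<bullet> v) \<partial>sphere_measure) = (\<integral>x. F (x \<bullet> P) \<partial>sphere_measure)"
proof -
  let ?H = "hh (P - v)"
  have HP: "?H P = v" using nv by (intro hh_swap) simp
  have "(\<lambda>x. F (x \<bullet> v)) = (\<lambda>x. F (?H x \<bullet> P))"
    by (simp add: hh_sym HP)
  then show ?thesis
    using sph_hh[OF meas_inner_F(1)[OF F, of P], of "P - v"] by simp
qed

lemma L2:
  fixes F :: "real \<Rightarrow> real" and P v :: "'a::euclidean_space"
  assumes F: "continuous_on UNIV F" and nv: "norm v = norm P"
  shows "(\<integral>x. (x \<bullet> P) * F (x \<bullet> v) \<partial>sphere_measure) = (\<integral>x. (x \<bullet> v) * F (x \<bullet> P) \<partial>sphere_measure)"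
proof -
  let ?H = "hh (P - v)"
  have HP: "?H P = v" using nv by (intro hh_swap) simp
  have Hv: "?H v = P" using HP hh_invol by metis
  have "(\<lambda>x. (x \<bullet> P) * F (x \<bullet> v)) = (\<lambda>x. (?H x \<bullet> v) * F (?H x \<bullet> P))"
    by (simp add: hh_sym HP Hv)
  then show ?thesis
    using sph_hh[OF meas_inner_F(2)[OF F, where w=v and v=P], of "P - v"] by simp
qed

lemma L3:
  fixes F :: "real \<Rightarrow> real" and P w :: "'a::euclidean_space"
  assumes F: "continuous_on UNIV F" and o: "P \<bullet> w = 0"
  shows "(\<integral>x. (x \<bullet> w) * F (x \<bullet> P) \<partial>sphere_measure) = 0"
proof -
  let ?H = "hh w"
  have "(\<lambda>x. (?H x \<bullet> w) * F (?H x \<bullet> P)) = (\<lambda>x. - ((x \<bullet> w) * F (x \<bullet> P)))"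
    by (simp add: hh_sym hh_self hh_orth[OF o])
  then have "(\<integral>x. (x \<bullet> w) * F (x \<bullet> P) \<partial>sphere_measure) = - (\<integral>x. (x \<bullet> w) * F (x \<bullet> P) \<partial>sphere_measure)"
    using sph_hh[OF meas_inner_F(2)[OF F, where w=w and v=P], of w] by simp
  then show ?thesis by simp
qed

lemma integrable_inner_F:
  fixes F :: "real \<Rightarrow> real" and P w :: "'a::euclidean_space"
  assumes F: "continuous_on UNIV F" and nv: "norm v \<le> 1"
  shows "integrable sphere_measure (\<lambda>x. (x \<bullet> w) * F (x \<bullet> v))"
    and "integrable sphere_measure (\<lambda>x. F (x \<bullet> v))"
proof -
  obtain B where B: "\<And>t. \<bar>t\<bar> \<le> 1 \<Longrightarrow> \<bar>F t\<bar> \<le> B" using F_bound[OF F] by blast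
  have B0: "0 \<le> B" using B[of 0] by simp
  have bd: "\<bar>F (x \<bullet> v)\<bar> \<le> B" if "norm x = 1" for x :: 'a
    using B inner_le1[OF that nv] by blast
  have "\<bar>(x \<bullet> w) * F (x \<bullet> v)\<bar> \<le> norm w * B" if "norm x = 1" for x :: 'a
  proof -
    have "\<bar>x \<bullet> w\<bar> \<le> norm w" using Cauchy_Schwarz_ineq2[of x w] that by simp
    then show ?thesis unfolding abs_mult using bd[OF that] by (intro mult_mono) auto
  qed
  then show "integrable sphere_measure (\<lambda>x. (x \<bullet> w) * F (x \<bullet> v))"
    by (intro integrable_sph meas_inner_F F)
  show "integrable sphere_measure (\<lambda>x. F (x \<bullet> v))"
    using bd by (intro integrable_sph meas_inner_F F)
qed

lemma L4:
  fixes F :: "real \<Rightarrow> real" and P v :: "'a::euclidean_space"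
  assumes F: "continuous_on UNIV F" and nP: "norm P = 1"
  shows "(\<integral>x. (x \<bullet> v) * F (x \<bullet> P) \<partial>sphere_measure) = (v \<bullet> P) * (\<integral>x. (x \<bullet> P) * F (x \<bullet> P) \<partial>sphere_measure)"
proof -
  define w where "w = v - (v \<bullet> P) *\<^sub>R P"
  have PP: "P \<bullet> P = 1" using nP power2_norm_eq_inner[of P] by simp
  have o: "P \<bullet> w = 0" by (simp add: w_def inner_diff_right PP inner_commute)
  have eq: "(\<lambda>x. (x \<bullet> v) * F (x \<bullet> P)) = (\<lambda>x. (v \<bullet> P) * ((x \<bullet> P) * F (x \<bullet> P)) + (x \<bullet> w) * F (x \<bullet> P))"
    by (simp add: w_def inner_diff_right algebra_simps)
  have "(\<integral>x. (x \<bullet> v) * F (x \<bullet> P) \<partial>sphere_measure) =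
      (\<integral>x. (v \<bullet> P) * ((x \<bullet> P) * F (x \<bullet> P)) \<partial>sphere_measure) + (\<integral>x. (x \<bullet> w) * F (x \<bullet> P) \<partial>sphere_measure)"
    unfolding eq using nP
    by (intro Bochner_Integration.integral_add integrable_mult_right integrable_inner_F F) auto
  also have "\<dots> = (v \<bullet> P) * (\<integral>x. (x \<bullet> P) * F (x \<bullet> P) \<partial>sphere_measure)"
    using L3[OF F o] by simp
  finally show ?thesis .
qed



lemma nsq: "norm (x::'a::euclidean_space) = 1 \<Longrightarrow> norm P = 1 \<Longrightarrow> (norm (x - P))\<^sup>2 = 2 - 2 * (x \<bullet> P)"
proof -
  assume a: "norm x = 1" "norm P = 1"
  have xx: "x \<bullet> x = 1" "P \<bullet> P = 1" using a power2_norm_eq_inner[of x] power2_norm_eq_inner[of P] by simp_all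
  have "(norm (x - P))\<^sup>2 = (x - P) \<bullet> (x - P)" by (simp add: power2_norm_eq_inner)
  also have "\<dots> = x \<bullet> x - 2 * (x \<bullet> P) + P \<bullet> P" by (simp add: inner_diff_left inner_diff_right inner_commute)
  finally show ?thesis using xx by simp
qed

lemma sf_sph: "sigma_finite_measure (sphere_measure::'a::euclidean_space measure)"
  using finite_sph unfolding finite_measure_def by blast

lemma M1:
  fixes F :: "real \<Rightarrow> real" and P :: "'a::euclidean_space"
  assumes F: "continuous_on UNIV F" and nP: "norm P = 1"
  shows "sph_var P (\<lambda>x. F (x \<bullet> P)) = 2 * (\<integral>x. F (x \<bullet> P) \<partial>sphere_measure) - 2 * (\<integral>x. (x \<bullet> P) * F (x \<bullet> P) \<partial>sphere_measure)"
proof -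
  have [measurable]: "F \<in> borel_measurable borel" using F by (rule meas_F)
  have "sph_var P (\<lambda>x. F (x \<bullet> P)) = (\<integral>x. 2 * F (x \<bullet> P) - 2 * ((x \<bullet> P) * F (x \<bullet> P)) \<partial>sphere_measure)"
    unfolding sph_var_def
  proof (rule integral_cong_AE)
    show "AE x in sphere_measure. (norm (x - P))\<^sup>2 * F (x \<bullet> P) = 2 * F (x \<bullet> P) - 2 * ((x \<bullet> P) * F (x \<bullet> P))"
      using AE_sph by eventually_elim (simp add: nsq nP algebra_simps)
  qed (simp_all add: meas_sph_iff)
  also have "\<dots> = 2 * (\<integral>x. F (x \<bullet> P) \<partial>sphere_measure) - 2 * (\<integral>x. (x \<bullet> P) * F (x \<bullet> P) \<partial>sphere_measure)"
    using nP by (subst Bochner_Integration.integral_diff) (auto intro!: integrable_mult_right integrable_inner_F(1)[OF F] integrable_inner_F(2)[OF F])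
  finally show ?thesis .
qed

lemma M2:
  fixes F :: "real \<Rightarrow> real" and P y :: "'a::euclidean_space"
  assumes F: "continuous_on UNIV F" and nP: "norm P = 1" and ny: "norm y = 1"
  shows "(\<integral>x. (norm (x - P))\<^sup>2 * F (x \<bullet> y) \<partial>sphere_measure) =
     2 * (\<integral>x. F (x \<bullet> P) \<partial>sphere_measure) - 2 * (y \<bullet> P) * (\<integral>x. (x \<bullet> P) * F (x \<bullet> P) \<partial>sphere_measure)"
proof -
  have [measurable]: "F \<in> borel_measurable borel" using F by (rule meas_F)
  have "(\<integral>x. (norm (x - P))\<^sup>2 * F (x \<bullet> y) \<partial>sphere_measure) = (\<integral>x. 2 * F (x \<bullet> y) - 2 * ((x \<bullet> P) * F (x \<bullet> y)) \<partial>sphere_measure)"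
  proof (rule integral_cong_AE)
    show "AE x in sphere_measure. (norm (x - P))\<^sup>2 * F (x \<bullet> y) = 2 * F (x \<bullet> y) - 2 * ((x \<bullet> P) * F (x \<bullet> y))"
      using AE_sph by eventually_elim (simp add: nsq nP algebra_simps)
  qed (simp_all add: meas_sph_iff)
  also have "\<dots> = 2 * (\<integral>x. F (x \<bullet> y) \<partial>sphere_measure) - 2 * (\<integral>x. (x \<bullet> P) * F (x \<bullet> y) \<partial>sphere_measure)"
    using ny by (subst Bochner_Integration.integral_diff) (auto intro!: integrable_mult_right integrable_inner_F(1)[OF F] integrable_inner_F(2)[OF F])
  also have "(\<integral>x. F (x \<bullet> y) \<partial>sphere_measure) = (\<integral>x. F (x \<bullet> P) \<partial>sphere_measure)"
    using ny nP by (intro L1 F) simp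
  also have "(\<integral>x. (x \<bullet> P) * F (x \<bullet> y) \<partial>sphere_measure) = (\<integral>x. (x \<bullet> y) * F (x \<bullet> P) \<partial>sphere_measure)"
    using ny nP by (intro L2 F) simp
  also have "\<dots> = (y \<bullet> P) * (\<integral>x. (x \<bullet> P) * F (x \<bullet> P) \<partial>sphere_measure)"
    using nP by (intro L4 F)
  finally show ?thesis by simp
qed



lemma Mmain:
  fixes F1 F2 :: "real \<Rightarrow> real" and P :: "'a::euclidean_space"
  assumes F1: "continuous_on UNIV F1" and F2: "continuous_on UNIV F2" and nP: "norm P = 1"
  shows "sph_var P (iso_sum_density P F1 F2) =
     2 * (\<integral>x. F1 (x \<bullet> P) \<partial>sphere_measure) * (\<integral>x. F2 (x \<bullet> P) \<partial>sphere_measure)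
     - 2 * (\<integral>x. (x \<bullet> P) * F1 (x \<bullet> P) \<partial>sphere_measure) * (\<integral>x. (x \<bullet> P) * F2 (x \<bullet> P) \<partial>sphere_measure)"
proof -
  let ?S = "sphere_measure :: 'a measure"
  have [measurable]: "F1 \<in> borel_measurable borel" using F1 by (rule meas_F)
  have [measurable]: "F2 \<in> borel_measurable borel" using F2 by (rule meas_F)
  interpret S: finite_measure ?S by (rule finite_sph)
  interpret pair_sigma_finite ?S ?S by (simp add: pair_sigma_finite_def sf_sph)
  interpret SS: finite_measure "?S \<Otimes>\<^sub>M ?S" by (intro finite_measure_pair_measure finite_sph)
  define c1 where "c1 = (\<integral>x. F1 (x \<bullet> P) \<partial>?S)"
  define c2 where "c2 = (\<integral>x. F2 (x \<bullet> P) \<partial>?S)"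
  define m1 where "m1 = (\<integral>x. (x \<bullet> P) * F1 (x \<bullet> P) \<partial>?S)"
  define m2 where "m2 = (\<integral>x. (x \<bullet> P) * F2 (x \<bullet> P) \<partial>?S)"
  obtain B1 where B1: "\<And>t. \<bar>t\<bar> \<le> 1 \<Longrightarrow> \<bar>F1 t\<bar> \<le> B1" using F_bound[OF F1] by blast
  obtain B2 where B2: "\<And>t. \<bar>t\<bar> \<le> 1 \<Longrightarrow> \<bar>F2 t\<bar> \<le> B2" using F_bound[OF F2] by blast
  define h where "h x y = (norm (x - P))\<^sup>2 * (F1 (y \<bullet> P) * F2 (x \<bullet> y))" for x y :: 'a
  have mh: "case_prod h \<in> borel_measurable (?S \<Otimes>\<^sub>M ?S)"
    unfolding h_def by measurable
  have mh': "(\<lambda>(y, x). h x y) \<in> borel_measurable (?S \<Otimes>\<^sub>M ?S)"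
    unfolding h_def by measurable
  have AEp: "AE z in ?S \<Otimes>\<^sub>M ?S. norm (fst z) = 1 \<and> norm (snd z) = 1"
  proof (rule AE_pair_measure)
    show "{z \<in> space (?S \<Otimes>\<^sub>M ?S). norm (fst z) = 1 \<and> norm (snd z) = 1} \<in> sets (?S \<Otimes>\<^sub>M ?S)"
      by measurable
    show "AE x in ?S. AE y in ?S. norm (fst (x, y)) = 1 \<and> norm (snd (x, y)) = 1"
      using AE_sph
    proof eventually_elim
      case (elim x)
      show ?case using AE_sph by eventually_elim (simp add: elim)
    qed
  qed
  have hbd: "\<bar>h x y\<bar> \<le> 4 * (B1 * B2)" if "norm x = 1" "norm y = 1" for x y
  proof -
    have a: "\<bar>F1 (y \<bullet> P)\<bar> \<le> B1" using B1 inner_le1[OF that(2)] nP by simp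
    have b: "\<bar>F2 (x \<bullet> y)\<bar> \<le> B2" using B2 inner_le1[OF that(1)] that(2) by simp
    have c: "(norm (x - P))\<^sup>2 \<le> 4"
      using nsq[OF that(1) nP] inner_le1[OF that(1), of P] nP by (simp add: abs_le_iff)
    have "\<bar>h x y\<bar> = (norm (x - P))\<^sup>2 * (\<bar>F1 (y \<bullet> P)\<bar> * \<bar>F2 (x \<bullet> y)\<bar>)"
      by (simp add: h_def abs_mult)
    also have "\<dots> \<le> 4 * (B1 * B2)"
      using a b c by (intro mult_mono) (auto intro: mult_mono order_trans[OF abs_ge_zero])
    finally show ?thesis .
  qed
  have int: "integrable (?S \<Otimes>\<^sub>M ?S) (case_prod h)"
  proof (rule SS.integrable_const_bound[where B="4 * (B1 * B2)"])
    show "AE z in ?S \<Otimes>\<^sub>M ?S. norm (case_prod h z) \<le> 4 * (B1 * B2)"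
      using AEp by eventually_elim (auto simp: hbd)
  qed (rule mh)
  have "sph_var P (iso_sum_density P F1 F2) = (\<integral>x. (\<integral>y. h x y \<partial>?S) \<partial>?S)"
    by (simp add: sph_var_def iso_sum_density_def h_def)
  also have "\<dots> = (\<integral>y. (\<integral>x. h x y \<partial>?S) \<partial>?S)"
    using Fubini_integral[OF int] by simp
  also have "\<dots> = (\<integral>y. F1 (y \<bullet> P) * (\<integral>x. (norm (x - P))\<^sup>2 * F2 (x \<bullet> y) \<partial>?S) \<partial>?S)"
    by (simp add: h_def mult.left_commute)
  also have "\<dots> = (\<integral>y. (2 * c2) * F1 (y \<bullet> P) - (2 * m2) * ((y \<bullet> P) * F1 (y \<bullet> P)) \<partial>?S)"
  proof (rule integral_cong_AE)
    show "AE y in ?S. F1 (y \<bullet> P) * (\<integral>x. (norm (x - P))\<^sup>2 * F2 (x \<bullet> y) \<partial>?S) =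
        (2 * c2) * F1 (y \<bullet> P) - (2 * m2) * ((y \<bullet> P) * F1 (y \<bullet> P))"
      using AE_sph
    proof eventually_elim
      case (elim y)
      show ?case by (subst M2[OF F2 nP elim]) (simp add: c2_def m2_def algebra_simps)
    qed
    have "(\<lambda>y. \<integral>x. (norm (x - P))\<^sup>2 * F2 (x \<bullet> y) \<partial>?S) \<in> borel_measurable ?S"
      by measurable
    then show "(\<lambda>y. F1 (y \<bullet> P) * (\<integral>x. (norm (x - P))\<^sup>2 * F2 (x \<bullet> y) \<partial>?S)) \<in> borel_measurable ?S"
      by measurable
  qed measurable
  also have "\<dots> = 2 * c1 * c2 - 2 * m1 * m2"
    using nP by (subst Bochner_Integration.integral_diff)
      (auto intro!: integrable_mult_right integrable_inner_F(1)[OF F1] integrable_inner_F(2)[OF F1]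
            simp: c1_def m1_def)
  finally show ?thesis by (simp add: c1_def c2_def m1_def m2_def)
qed



lemma pow_sum_nonneg: "0 \<le> (t::real) ^ k + (- t) ^ k"
proof (cases "even k")
  case True then show ?thesis by (simp add: zero_le_even_power)
next
  case False then show ?thesis by (simp add: power_minus_odd)
qed

lemma norm_const_pos:
  fixes P :: "'a::euclidean_space"
  assumes nP: "norm P = 1"
  shows "norm_const P k > 0"
proof -
  let ?S = "sphere_measure :: 'a measure"
  have cF: "continuous_on UNIV (\<lambda>t::real. 1 + t ^ k)" by (intro continuous_intros)
  have cG: "continuous_on UNIV (\<lambda>t::real. 1 + (- t) ^ k)" by (intro continuous_intros)
  have i1: "integrable ?S (\<lambda>x. 1 + (x \<bullet> P) ^ k)"
    using integrable_inner_F(2)[OF cF, of P] nP by simp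
  have i2: "integrable ?S (\<lambda>x. 1 + (- (x \<bullet> P)) ^ k)"
    using integrable_inner_F(2)[OF cG, of P] nP by simp
  have linm: "linear (uminus :: 'a \<Rightarrow> 'a)" by (rule linearI) auto
  have m: "(\<lambda>x::'a. 1 + (x \<bullet> P) ^ k) \<in> borel_measurable borel"
    using meas_inner_F(1)[OF cF, of P] by simp
  have "norm_const P k = (\<integral>x. 1 + ((- x) \<bullet> P) ^ k \<partial>?S)"
    unfolding norm_const_def using sph_invariant[OF linm _ m] by simp
  then have eq2: "norm_const P k = (\<integral>x. 1 + (- (x \<bullet> P)) ^ k \<partial>?S)" by simp
  have sum: "(\<integral>x. (1 + (x \<bullet> P) ^ k) + (1 + (- (x \<bullet> P)) ^ k) \<partial>?S) =
      (\<integral>x. 1 + (x \<bullet> P) ^ k \<partial>?S) + (\<integral>x. 1 + (- (x \<bullet> P)) ^ k \<partial>?S)"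
    by (rule Bochner_Integration.integral_add[OF i1 i2])
  have "2 * norm_const P k = (\<integral>x. (1 + (x \<bullet> P) ^ k) + (1 + (- (x \<bullet> P)) ^ k) \<partial>?S)"
    unfolding sum using eq2 norm_const_def[of P k] by linarith
  also have "\<dots> \<ge> (\<integral>x. 2 \<partial>?S)"
    by (rule integral_mono[OF finite_measure.integrable_const[OF finite_sph] Bochner_Integration.integrable_add[OF i1 i2]])
       (use pow_sum_nonneg in \<open>simp add: add.assoc\<close>)
  also have "(\<integral>x. 2 \<partial>?S) = 2 * measure ?S UNIV" by simp
  finally show ?thesis using measure_sph_pos[where 'a='a] by simp
qed

theorem lemma3p3:
  fixes P :: "'a::euclidean_space" and k l :: nat
  assumes "DIM('a) \<ge> 3"
    and "P \<in> Basis"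
  shows "sph_var P (iso_sum_density P (g_prof P k) (g_prof P l)) =
           (2 * (sph_var P (\<lambda>x. g_prof P k (x \<bullet> P)) + sph_var P (\<lambda>x. g_prof P l (x \<bullet> P)))
            - sph_var P (\<lambda>x. g_prof P k (x \<bullet> P)) * sph_var P (\<lambda>x. g_prof P l (x \<bullet> P))) / 2"
proof -
  have nP: "norm P = 1" using assms(2) by simp
  have cont: "continuous_on UNIV (g_prof P j)" for j
    unfolding g_prof_def divide_inverse by (intro continuous_intros)
  have c1: "(\<integral>x. g_prof P j (x \<bullet> P) \<partial>sphere_measure) = 1" for j
  proof -
    have ne: "norm_const P j \<noteq> 0" using norm_const_pos[OF nP, of j] by simp
    have "(\<integral>x. g_prof P j (x \<bullet> P) \<partial>sphere_measure) = (\<integral>x. (1 + (x \<bullet> P) ^ j) / norm_const P j \<partial>sphere_measure)"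
      by (simp only: g_prof_def)
    also have "\<dots> = (\<integral>x. 1 + (x \<bullet> P) ^ j \<partial>sphere_measure) / norm_const P j"
      by (rule integral_divide_zero)
    also have "\<dots> = norm_const P j / norm_const P j"
      by (simp only: norm_const_def)
    finally show ?thesis using ne by simp
  qed
  define m where "m j = (\<integral>x. (x \<bullet> P) * g_prof P j (x \<bullet> P) \<partial>sphere_measure)" for j
  have V: "sph_var P (\<lambda>x. g_prof P j (x \<bullet> P)) = 2 - 2 * m j" for j
    using M1[OF cont nP, of j] c1[of j] by (simp add: m_def)
  have S: "sph_var P (iso_sum_density P (g_prof P k) (g_prof P l)) = 2 - 2 * m k * m l"
    using Mmain[OF cont cont nP, of k l] c1 by (simp add: m_def)
  show ?thesis unfolding S V by (simp add: algebra_simps)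
qed

end
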